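(* Let $A=(a_{ij})$ be a real $n\times n$ matrix with nonnegative entries, $\mathbf 1=(1,\ldots,1)^{\mathrm T}\in\mathbb R^n$, and $L=\operatorname{diag}(A\mathbf 1)-A$. Let $\Gamma$ be the digraph on vertex set $\{1,\ldots,n\}$ containing the arc $(i,j)$, $i\neq j$, whenever $a_{ij}>0$. Let $U$ be any matrix obtained from $L$ by (1) deleting, for each final class of $\Gamma$, the column of $L$ corresponding to one (arbitrarily chosen) vertex of that final class, and (2) adding $\mathbf 1$ as the first column. Then the orthogonal projection $S$ of $\mathbb R^n$ onto the subspace $\mathcal R(L)\oplus\operatorname{span}(\mathbf 1)$ is given by $S=U(U^{\mathrm T}U)^{-1}U^{\mathrm T}$.
   Context: $\mathcal R(L)$ denotes the range (column space) of $L$. The $k$-th column of $L$ is said to correspond to vertex $k$. A final class of $\Gamma$ is the vertex set of a strongly connected component (bicomponent) of $\Gamma$ from which there is no arc directed to a vertex outside it. *)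

theory Defs
  imports "Jordan_Normal_Form.Matrix"
begin

definition arc :: "nat \<Rightarrow> real mat \<Rightarrow> nat \<Rightarrow> nat \<Rightarrow> bool" where
  "arc n A i j \<longleftrightarrow> i < n \<and> j < n \<and> i \<noteq> j \<and> A $$ (i, j) > 0"

definition reach :: "nat \<Rightarrow> real mat \<Rightarrow> nat \<Rightarrow> nat \<Rightarrow> bool" where
  "reach n A i j \<longleftrightarrow> i < n \<and> (arc n A)\<^sup>*\<^sup>* i j"

definition bicomponent :: "nat \<Rightarrow> real mat \<Rightarrow> nat \<Rightarrow> nat set" where
  "bicomponent n A i = {j. reach n A i j \<and> reach n A j i}"

definition final_class :: "nat \<Rightarrow> real mat \<Rightarrow> nat set \<Rightarrow> bool" where
  "final_class n A C \<longleftrightarrow> (\<exists>i<n. C = bicomponent n A i) \<and>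
     (\<forall>i\<in>C. \<forall>j. arc n A i j \<longrightarrow> j \<in> C)"

definition laplacian :: "nat \<Rightarrow> real mat \<Rightarrow> real mat" where
  "laplacian n A = mat n n (\<lambda>(i, j). (if i = j then (\<Sum>k<n. A $$ (i, k)) else 0) - A $$ (i, j))"

definition ones_vec :: "nat \<Rightarrow> real vec" where
  "ones_vec n = vec n (\<lambda>_. 1)"

definition final_class_representatives :: "nat \<Rightarrow> real mat \<Rightarrow> nat set \<Rightarrow> bool" where
  "final_class_representatives n A D \<longleftrightarrow>
     (\<forall>d\<in>D. \<exists>C. final_class n A C \<and> d \<in> C) \<and>
     (\<forall>C. final_class n A C \<longrightarrow> card (D \<inter> C) = 1)"

definition U_mat :: "nat \<Rightarrow> real mat \<Rightarrow> nat set \<Rightarrow> real mat" where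
  "U_mat n A D = (let ks = sorted_list_of_set ({0..<n} - D) in
     mat n (Suc (length ks)) (\<lambda>(i, j). if j = 0 then 1 else laplacian n A $$ (i, ks ! (j - 1))))"

definition range_plus_ones :: "nat \<Rightarrow> real mat \<Rightarrow> real vec set" where
  "range_plus_ones n A = {laplacian n A *\<^sub>v x + c \<cdot>\<^sub>v ones_vec n | x c. x \<in> carrier_vec n}"

definition orth_proj_onto :: "nat \<Rightarrow> real vec set \<Rightarrow> real mat \<Rightarrow> bool" where
  "orth_proj_onto n W P \<longleftrightarrow> P \<in> carrier_mat n n \<and>
     (\<forall>x\<in>carrier_vec n. P *\<^sub>v x \<in> W \<and> (\<forall>w\<in>W. (x - P *\<^sub>v x) \<bullet> w = 0))"

end

theory Submission
  imports Defs "Jordan_Normal_Form.Determinant"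
begin

lemma rt_lt: "(arc n A)\<^sup>*\<^sup>* i j \<Longrightarrow> i < n \<Longrightarrow> j < n"
  by (induction rule: rtranclp_induct) (auto simp: arc_def)

lemma reach_final:
  assumes reps: "final_class_representatives n A D" and i: "i < n"
  shows "\<exists>d\<in>D. (arc n A)\<^sup>*\<^sup>* i d"
proof -
  define R where "R j = {m. (arc n A)\<^sup>*\<^sup>* j m}" for j
  have finR: "finite (R j)" for j
  proof -
    have "R j \<subseteq> insert j {..<n}"
    proof
      fix m assume "m \<in> R j"
      then have "(arc n A)\<^sup>*\<^sup>* j m" unfolding R_def by simp
      then show "m \<in> insert j {..<n}"
        by (cases rule: rtranclp.cases) (auto simp: arc_def)
    qed
    then show ?thesis by (rule finite_subset) auto
  qed
  define S where "S = {j. (arc n A)\<^sup>*\<^sup>* i j}"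
  have "i \<in> S" unfolding S_def by simp
  obtain j where jS: "j \<in> S" and jmin: "\<And>m. m \<in> S \<Longrightarrow> card (R j) \<le> card (R m)"
    using ex_has_least_nat[of "\<lambda>j. j \<in> S" i "\<lambda>j. card (R j)"] \<open>i \<in> S\<close> by blast
  have ij: "(arc n A)\<^sup>*\<^sup>* i j" using jS S_def by simp
  have jn: "j < n" using rt_lt[OF ij i] .
  define C where "C = bicomponent n A j"
  have fc: "final_class n A C"
    unfolding final_class_def
  proof (intro conjI ballI allI impI)
    show "\<exists>i<n. C = bicomponent n A i" using jn C_def by blast
  next
    fix l m assume lC: "l \<in> C" and lm: "arc n A l m"
    have jl: "(arc n A)\<^sup>*\<^sup>* j l" using lC unfolding C_def bicomponent_def reach_def by auto
    have jm: "(arc n A)\<^sup>*\<^sup>* j m" using jl lm by auto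
    have "m \<in> S" using ij jm unfolding S_def by auto
    then have c: "card (R j) \<le> card (R m)" by (rule jmin)
    have "R m \<subseteq> R j" using jm unfolding R_def by auto
    then have "R m = R j" using c finR card_seteq by blast
    moreover have "j \<in> R j" unfolding R_def by simp
    ultimately have mj: "(arc n A)\<^sup>*\<^sup>* m j" unfolding R_def by auto
    have mn: "m < n" using lm by (simp add: arc_def)
    show "m \<in> C" unfolding C_def bicomponent_def reach_def using jn mn jm mj by auto
  qed
  have "card (D \<inter> C) = 1" using reps fc unfolding final_class_representatives_def by auto
  then obtain d where "d \<in> D \<inter> C" by (metis card_1_singletonE insertI1)
  then have "d \<in> D" "(arc n A)\<^sup>*\<^sup>* j d" unfolding C_def bicomponent_def reach_def by auto
  then show ?thesis using ij by (meson rtranclp_trans)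
qed

definition hl :: "nat \<Rightarrow> real mat \<Rightarrow> (nat \<Rightarrow> real) \<Rightarrow> nat \<Rightarrow> real" where
  "hl n A x i = (\<Sum>j<n. A $$ (i, j) * (x i - x j))"

lemma lap_mult:
  assumes "A \<in> carrier_mat n n" "x \<in> carrier_vec n" "i < n"
  shows "(laplacian n A *\<^sub>v x) $ i = hl n A (\<lambda>j. x $ j) i"
proof -
  have "(laplacian n A *\<^sub>v x) $ i = (\<Sum>j<n. ((if i = j then (\<Sum>k<n. A $$ (i, k)) else 0) - A $$ (i, j)) * x $ j)"
    using assms unfolding laplacian_def
    by (auto simp: scalar_prod_def lessThan_atLeast0 intro!: sum.cong)
  also have "\<dots> = (\<Sum>j<n. (if i = j then (\<Sum>k<n. A $$ (i, k)) * x $ j else 0)) - (\<Sum>j<n. A $$ (i, j) * x $ j)"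
    by (subst sum_subtractf[symmetric]) (rule sum.cong, auto simp: algebra_simps)
  also have "\<dots> = (\<Sum>k<n. A $$ (i, k)) * x $ i - (\<Sum>j<n. A $$ (i, j) * x $ j)"
    using assms(3) by (simp add: sum.delta)
  also have "\<dots> = hl n A (\<lambda>j. x $ j) i"
    unfolding hl_def by (simp add: sum_distrib_right right_diff_distrib sum_subtractf)
  finally show ?thesis .
qed

lemma harm_arc:
  assumes nn: "\<And>i j. i < n \<Longrightarrow> j < n \<Longrightarrow> A $$ (i, j) \<ge> 0"
    and i: "i < n" and h: "hl n A x i = 0" and le: "\<And>j. arc n A i j \<Longrightarrow> x j \<le> x i"
    and a: "arc n A i j"
  shows "x j = x i"
proof -
  have t: "\<forall>k\<in>{..<n}. A $$ (i, k) * (x i - x k) \<ge> 0"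
  proof
    fix k assume k: "k \<in> {..<n}"
    show "A $$ (i, k) * (x i - x k) \<ge> 0"
    proof (cases "k = i \<or> A $$ (i, k) \<le> 0")
      case True
      then show ?thesis using nn[OF i, of k] k by auto
    next
      case False
      then have "arc n A i k" using i k by (auto simp: arc_def)
      then show ?thesis using le nn[OF i, of k] k by simp
    qed
  qed
  have "\<forall>k\<in>{..<n}. A $$ (i, k) * (x i - x k) = 0"
    using h t unfolding hl_def by (subst sum_nonneg_eq_0_iff[symmetric]) auto
  moreover have "j \<in> {..<n}" using a by (simp add: arc_def)
  ultimately have "A $$ (i, j) * (x i - x j) = 0" by blast
  moreover have "A $$ (i, j) > 0" using a by (simp add: arc_def)
  ultimately show ?thesis by simp
qed

lemma propagate:
  assumes nn: "\<And>i j. i < n \<Longrightarrow> j < n \<Longrightarrow> A $$ (i, j) \<ge> 0"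
    and closed: "\<And>j m. j \<in> P \<Longrightarrow> arc n A j m \<Longrightarrow> m \<in> P"
    and bound: "\<And>j. j \<in> P \<Longrightarrow> x j \<le> M"
    and harm: "\<And>i. i \<in> E \<Longrightarrow> i < n \<Longrightarrow> hl n A x i = 0"
    and i0: "i0 \<in> P" "x i0 = M"
    and r: "(arc n A)\<^sup>*\<^sup>* i0 j"
  shows "j \<in> P \<and> (x j = M \<or> (\<exists>e\<in>P. e \<notin> E \<and> x e = M))"
  using r
proof (induction rule: rtranclp_induct)
  case base
  then show ?case using i0 by auto
next
  case (step j m)
  have mP: "m \<in> P" using step closed by blast
  show ?case
  proof (cases "\<exists>e\<in>P. e \<notin> E \<and> x e = M")
    case True then show ?thesis using mP by auto
  next
    case False
    then have xj: "x j = M" and jP: "j \<in> P" using step by auto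
    then have jE: "j \<in> E" using False by auto
    have jn: "j < n" using step(2) by (simp add: arc_def)
    have "x m = x j"
      by (rule harm_arc[OF nn jn harm[OF jE jn]]) (use closed bound jP xj step(2) in auto)
    then show ?thesis using mP xj by auto
  qed
qed

lemma hl_neg: "hl n A (\<lambda>j. - x j) i = - hl n A x i"
  unfolding hl_def by (simp add: sum_negf[symmetric] algebra_simps)

lemma class_sub:
  assumes "final_class n A C" shows "C \<subseteq> {..<n}"
  using assms unfolding final_class_def bicomponent_def reach_def by (auto dest: rt_lt)

lemma uniq_le:
  assumes nn: "\<And>i j. i < n \<Longrightarrow> j < n \<Longrightarrow> A $$ (i, j) \<ge> 0"
    and reps: "final_class_representatives n A D"
    and xD: "\<And>d. d \<in> D \<Longrightarrow> x d = 0"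
    and harm: "\<And>i. i < n \<Longrightarrow> i \<notin> D \<Longrightarrow> hl n A x i = 0"
    and i: "i < n"
  shows "x i \<le> 0"
proof (rule ccontr)
  assume "\<not> x i \<le> 0"
  define M where "M = Max (x ` {..<n})"
  have fin: "finite (x ` {..<n})" "x ` {..<n} \<noteq> {}" using i by auto
  have le: "\<And>j. j < n \<Longrightarrow> x j \<le> M" unfolding M_def using fin by auto
  have "M \<in> x ` {..<n}" unfolding M_def using fin by (rule Max_in)
  then obtain i0 where i0: "i0 < n" "x i0 = M" by auto
  have Mpos: "M > 0" using le[OF i] \<open>\<not> x i \<le> 0\<close> by simp
  obtain d where d: "d \<in> D" "(arc n A)\<^sup>*\<^sup>* i0 d" using reach_final[OF reps i0(1)] by blast
  have "d \<in> {..<n} \<and> (x d = M \<or> (\<exists>e\<in>{..<n}. e \<notin> {i. i \<notin> D} \<and> x e = M))"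
    by (rule propagate[OF nn, where P="{..<n}" and E="{i. i \<notin> D}"])
       (use le harm i0 d in \<open>auto simp: arc_def\<close>)
  then show False using xD d Mpos by auto
qed

lemma uniq_zero:
  assumes nn: "\<And>i j. i < n \<Longrightarrow> j < n \<Longrightarrow> A $$ (i, j) \<ge> 0"
    and reps: "final_class_representatives n A D"
    and xD: "\<And>d. d \<in> D \<Longrightarrow> x d = 0"
    and harm: "\<And>i. i < n \<Longrightarrow> i \<notin> D \<Longrightarrow> hl n A x i = 0"
    and i: "i < n"
  shows "x i = 0"
proof -
  have "x i \<le> 0" by (rule uniq_le[OF nn reps xD harm i])
  moreover have "- x i \<le> 0"
    by (rule uniq_le[OF nn reps, of "\<lambda>j. - x j"]) (use xD harm i hl_neg in auto)
  ultimately show ?thesis by simp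
qed

lemma class_max:
  assumes nn: "\<And>i j. i < n \<Longrightarrow> j < n \<Longrightarrow> A $$ (i, j) \<ge> 0"
    and reps: "final_class_representatives n A D"
    and fc: "final_class n A C" and dD: "d \<in> D" and dC: "d \<in> C"
    and harm: "\<And>i. i < n \<Longrightarrow> i \<notin> D \<Longrightarrow> hl n A x i = 0"
  shows "\<forall>j\<in>C. x j \<le> x d"
proof -
  have Cs: "C \<subseteq> {..<n}" by (rule class_sub[OF fc])
  then have fin: "finite (x ` C)" "x ` C \<noteq> {}" using dC finite_subset by auto
  define M where "M = Max (x ` C)"
  have le: "\<And>j. j \<in> C \<Longrightarrow> x j \<le> M" unfolding M_def using fin by auto
  have "M \<in> x ` C" unfolding M_def using fin by (rule Max_in)
  then obtain i0 where i0: "i0 \<in> C" "x i0 = M" by auto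
  obtain c where c: "C = bicomponent n A c" using fc unfolding final_class_def by blast
  have "(arc n A)\<^sup>*\<^sup>* i0 c" "(arc n A)\<^sup>*\<^sup>* c d"
    using i0(1) dC unfolding c bicomponent_def reach_def by auto
  then have r: "(arc n A)\<^sup>*\<^sup>* i0 d" by (rule rtranclp_trans)
  have DC: "card (D \<inter> C) = 1" using reps fc unfolding final_class_representatives_def by auto
  have "d \<in> C \<and> (x d = M \<or> (\<exists>e\<in>C. e \<notin> {i. i \<notin> D} \<and> x e = M))"
    by (rule propagate[OF nn, where P="C" and E="{i. i \<notin> D}"])
       (use le harm i0 r fc in \<open>auto simp: final_class_def\<close>)
  moreover have "\<And>e. e \<in> C \<Longrightarrow> e \<in> D \<Longrightarrow> e = d"
    using DC dD dC by (metis IntI card_1_singletonE singletonD)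
  ultimately have "x d = M" by auto
  then show ?thesis using le by auto
qed

lemma class_harm:
  assumes nn: "\<And>i j. i < n \<Longrightarrow> j < n \<Longrightarrow> A $$ (i, j) \<ge> 0"
    and reps: "final_class_representatives n A D"
    and dD: "d \<in> D"
    and harm: "\<And>i. i < n \<Longrightarrow> i \<notin> D \<Longrightarrow> hl n A x i = 0"
  shows "hl n A x d = 0"
proof -
  obtain C where fc: "final_class n A C" and dC: "d \<in> C"
    using reps dD unfolding final_class_representatives_def by blast
  have m1: "\<forall>j\<in>C. x j \<le> x d" by (rule class_max[OF nn reps fc dD dC harm])
  have m2: "\<forall>j\<in>C. - x j \<le> - x d"
    by (rule class_max[OF nn reps fc dD dC, of "\<lambda>j. - x j"]) (use harm hl_neg in auto)
  have eq: "\<And>j. j \<in> C \<Longrightarrow> x j = x d" using m1 m2 by force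
  show ?thesis unfolding hl_def
  proof (rule sum.neutral, rule ballI)
    fix j assume j: "j \<in> {..<n}"
    show "A $$ (d, j) * (x d - x j) = 0"
    proof (cases "j = d \<or> A $$ (d, j) \<le> 0")
      case True
      have "d < n" using class_sub[OF fc] dC by auto
      then show ?thesis using True nn[of d j] j by auto
    next
      case False
      have "d < n" using class_sub[OF fc] dC by auto
      then have "arc n A d j" using False j by (auto simp: arc_def)
      then have "j \<in> C" using fc dC unfolding final_class_def by blast
      then show ?thesis using eq by simp
    qed
  qed
qed


lemma inj_inverse:
  fixes K :: "real mat"
  assumes K: "K \<in> carrier_mat n n"
    and inj: "\<And>v. v \<in> carrier_vec n \<Longrightarrow> K *\<^sub>v v = 0\<^sub>v n \<Longrightarrow> v = 0\<^sub>v n"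
  shows "\<exists>B\<in>carrier_mat n n. B * K = 1\<^sub>m n \<and> K * B = 1\<^sub>m n"
proof -
  have "det K \<noteq> 0" using det_0_iff_vec_prod_zero[OF K] inj by blast
  then have "K \<in> Units (ring_mat TYPE(real) n ())" by (rule det_non_zero_imp_unit[OF K])
  then show ?thesis unfolding Units_def ring_mat_def by auto
qed

lemma ks_facts:
  shows "distinct (sorted_list_of_set ({0..<n} - D))" "set (sorted_list_of_set ({0..<n::nat} - D)) = {0..<n} - D"
  by auto

lemma U_carrier: "U_mat n A D \<in> carrier_mat n (Suc (length (sorted_list_of_set ({0..<n} - D))))"
  unfolding U_mat_def Let_def by simp

lemma U_mult:
  assumes A: "A \<in> carrier_mat n n"
    and y: "y \<in> carrier_vec (Suc (length (sorted_list_of_set ({0..<n} - D))))"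
  defines "ks \<equiv> sorted_list_of_set ({0..<n} - D)"
  shows "U_mat n A D *\<^sub>v y = laplacian n A *\<^sub>v vec n (\<lambda>i. \<Sum>j<length ks. if ks ! j = i then y $ Suc j else 0)
           + y $ 0 \<cdot>\<^sub>v ones_vec n"
proof (rule eq_vecI)
  let ?m = "length ks"
  let ?x = "vec n (\<lambda>i. \<Sum>j<length ks. if ks ! j = i then y $ Suc j else 0)"
  have kn: "\<And>j. j < ?m \<Longrightarrow> ks ! j < n"
  proof -
    fix j assume "j < ?m"
    then have "ks ! j \<in> set ks" by (rule nth_mem)
    then show "ks ! j < n" using ks_facts(2)[of n D] unfolding ks_def by auto
  qed
  show "dim_vec (U_mat n A D *\<^sub>v y) = dim_vec (laplacian n A *\<^sub>v ?x + y $ 0 \<cdot>\<^sub>v ones_vec n)"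
    by (simp add: U_mat_def Let_def laplacian_def ones_vec_def)
  fix r assume "r < dim_vec (laplacian n A *\<^sub>v ?x + y $ 0 \<cdot>\<^sub>v ones_vec n)"
  then have r: "r < n" by (simp add: ones_vec_def)
  have "(U_mat n A D *\<^sub>v y) $ r = (\<Sum>c<Suc ?m. (if c = 0 then 1 else laplacian n A $$ (r, ks ! (c - 1))) * y $ c)"
    using r y unfolding U_mat_def Let_def ks_def
    by (auto simp: scalar_prod_def lessThan_atLeast0 intro!: sum.cong)
  also have "\<dots> = y $ 0 + (\<Sum>j<?m. laplacian n A $$ (r, ks ! j) * y $ Suc j)"
    by (subst sum.lessThan_Suc_shift) simp
  finally have e1: "(U_mat n A D *\<^sub>v y) $ r = y $ 0 + (\<Sum>j<?m. laplacian n A $$ (r, ks ! j) * y $ Suc j)" .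
  have "(laplacian n A *\<^sub>v ?x) $ r = (\<Sum>i<n. laplacian n A $$ (r, i) * (\<Sum>j<?m. if ks ! j = i then y $ Suc j else 0))"
    using r unfolding laplacian_def
    by (auto simp: scalar_prod_def lessThan_atLeast0 intro!: sum.cong)
  also have "\<dots> = (\<Sum>j<?m. \<Sum>i<n. if ks ! j = i then laplacian n A $$ (r, i) * y $ Suc j else 0)"
    unfolding sum_distrib_left by (subst sum.swap) (auto intro!: sum.cong)
  also have "\<dots> = (\<Sum>j<?m. laplacian n A $$ (r, ks ! j) * y $ Suc j)"
    using kn by (auto intro!: sum.cong simp: sum.delta)
  finally have e2: "(laplacian n A *\<^sub>v ?x) $ r = (\<Sum>j<?m. laplacian n A $$ (r, ks ! j) * y $ Suc j)" .
  show "(U_mat n A D *\<^sub>v y) $ r = (laplacian n A *\<^sub>v ?x + y $ 0 \<cdot>\<^sub>v ones_vec n) $ r"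
    using e1 e2 r by (simp add: ones_vec_def laplacian_def)
qed

lemma sel_nth:
  assumes "distinct ks" "j0 < length ks"
  shows "(\<Sum>j<length ks. if ks ! j = ks ! j0 then f j else (0::real)) = f j0"
proof -
  have "(\<Sum>j<length ks. if ks ! j = ks ! j0 then f j else (0::real)) = (\<Sum>j<length ks. if j = j0 then f j else 0)"
    using assms by (intro sum.cong) (auto simp: nth_eq_iff_index_eq)
  then show ?thesis using assms by simp
qed

lemma sel_notin:
  assumes "i \<notin> set ks"
  shows "(\<Sum>j<length ks. if ks ! j = i then f j else (0::real)) = 0"
  using assms by (intro sum.neutral) auto

lemma reps_sub:
  assumes "final_class_representatives n A D" shows "D \<subseteq> {..<n}"
  using assms class_sub unfolding final_class_representatives_def by blast

lemma lap_carrier: "laplacian n A \<in> carrier_mat n n"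
  unfolding laplacian_def by simp

lemma ones_carrier: "ones_vec n \<in> carrier_vec n"
  unfolding ones_vec_def by simp

lemma ex_argmin:
  fixes x :: "nat \<Rightarrow> real"
  assumes "n > 0" shows "\<exists>i<n. \<forall>j<n. x i \<le> x j"
proof -
  have fin: "finite (x ` {..<n})" "x ` {..<n} \<noteq> {}" using assms by auto
  have "Min (x ` {..<n}) \<in> x ` {..<n}" using fin by (rule Min_in)
  then obtain i where "i < n" "x i = Min (x ` {..<n})" by auto
  then show ?thesis using fin by auto
qed

lemma min_hl:
  assumes nn: "\<And>i j. i < n \<Longrightarrow> j < n \<Longrightarrow> A $$ (i, j) \<ge> 0"
    and i: "i < n" and le: "\<forall>j<n. x i \<le> x j"
  shows "hl n A x i \<le> 0"
  unfolding hl_def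
  by (rule sum_nonpos) (use nn i le in \<open>auto intro: mult_nonneg_nonpos\<close>)

lemma const_zero:
  assumes nn: "\<And>i j. i < n \<Longrightarrow> j < n \<Longrightarrow> A $$ (i, j) \<ge> 0"
    and n: "n > 0" and h: "\<And>r. r < n \<Longrightarrow> hl n A x r = c"
  shows "c = 0"
proof -
  obtain i where i: "i < n" "\<forall>j<n. x i \<le> x j" using ex_argmin[OF n] by blast
  obtain i' where i': "i' < n" "\<forall>j<n. - x i' \<le> - x j" using ex_argmin[OF n, of "\<lambda>j. - x j"] by blast
  have "c \<le> 0" using min_hl[OF nn i] h[OF i(1)] by simp
  moreover have "- c \<le> 0" using min_hl[OF nn i'] hl_neg h[OF i'(1)] by simp
  ultimately show ?thesis by simp
qed

lemma U_inj:
  assumes A: "A \<in> carrier_mat n n" and n: "n > 0"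
    and nn: "\<And>i j. i < n \<Longrightarrow> j < n \<Longrightarrow> A $$ (i, j) \<ge> 0"
    and reps: "final_class_representatives n A D"
    and c: "c \<in> carrier_vec (Suc (length (sorted_list_of_set ({0..<n} - D))))"
    and Uc: "U_mat n A D *\<^sub>v c = 0\<^sub>v n"
  shows "c = 0\<^sub>v (Suc (length (sorted_list_of_set ({0..<n} - D))))"
proof -
  define ks where "ks = sorted_list_of_set ({0..<n} - D)"
  define xv where "xv = vec n (\<lambda>i. \<Sum>j<length ks. if ks ! j = i then c $ Suc j else 0)"
  have xvc: "xv \<in> carrier_vec n" unfolding xv_def by simp
  have eq: "laplacian n A *\<^sub>v xv + c $ 0 \<cdot>\<^sub>v ones_vec n = 0\<^sub>v n"
    using U_mult[OF A c] Uc unfolding xv_def ks_def by simp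
  have h: "hl n A (\<lambda>j. xv $ j) r = - c $ 0" if r: "r < n" for r
  proof -
    have "(laplacian n A *\<^sub>v xv + c $ 0 \<cdot>\<^sub>v ones_vec n) $ r = 0" using eq r by simp
    then have "(laplacian n A *\<^sub>v xv) $ r + c $ 0 = 0"
      using r lap_carrier[of n A] by (simp add: ones_vec_def)
    then show ?thesis using lap_mult[OF A xvc r] by simp
  qed
  have c0: "c $ 0 = 0" using const_zero[OF nn n h] by simp
  have dist: "distinct ks" and setks: "set ks = {0..<n} - D" unfolding ks_def by auto
  have xD: "xv $ d = 0" if d: "d \<in> D" for d
  proof -
    have "d < n" using d reps_sub[OF reps] by auto
    then show "xv $ d = 0" unfolding xv_def using d setks by (simp add: sel_notin)
  qed
  have hz: "hl n A (\<lambda>j. xv $ j) i = 0" if "i < n" "i \<notin> D" for i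
    using h c0 that by simp
  have xz: "xv $ i = 0" if i: "i < n" for i
    using uniq_zero[OF nn reps, of "\<lambda>j. xv $ j"] xD hz i by blast
  show ?thesis
  proof (rule eq_vecI)
    fix k assume k: "k < dim_vec (0\<^sub>v (Suc (length (sorted_list_of_set ({0..<n} - D)))) :: real vec)"
    show "c $ k = 0\<^sub>v (Suc (length (sorted_list_of_set ({0..<n} - D)))) $ k"
    proof (cases k)
      case 0 then show ?thesis using c0 k by simp
    next
      case (Suc j)
      then have j: "j < length ks" using k unfolding ks_def by simp
      have kn: "ks ! j < n" using nth_mem[OF j] setks by auto
      have "xv $ (ks ! j) = c $ Suc j" unfolding xv_def using kn sel_nth[OF dist j] by simp
      then show ?thesis using xz[OF kn] Suc k by simp
    qed
  qed (use c in simp)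
qed

lemma self_prod_zero:
  fixes v :: "real vec"
  assumes v: "v \<in> carrier_vec n" and z: "v \<bullet> v = 0"
  shows "v = 0\<^sub>v n"
proof (rule eq_vecI)
  have "(\<Sum>i\<in>{0..<n}. v $ i * v $ i) = 0" using z v by (simp add: scalar_prod_def)
  then have "\<forall>i\<in>{0..<n}. v $ i * v $ i = 0"
    by (subst sum_nonneg_eq_0_iff[symmetric]) auto
  then show "\<And>i. i < dim_vec (0\<^sub>v n) \<Longrightarrow> v $ i = 0\<^sub>v n $ i" by simp
qed (use v in simp)

lemma harm_ext:
  assumes A: "A \<in> carrier_mat n n"
    and nn: "\<And>i j. i < n \<Longrightarrow> j < n \<Longrightarrow> A $$ (i, j) \<ge> 0"
    and reps: "final_class_representatives n A D"
    and d: "d \<in> D"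
  shows "\<exists>z\<in>carrier_vec n. laplacian n A *\<^sub>v z = 0\<^sub>v n \<and> (\<forall>i\<in>D. z $ i = (if i = d then 1 else 0))"
proof -
  let ?L = "laplacian n A"
  define K where "K = mat n n (\<lambda>(i, j). if i \<in> D then (if i = j then 1 else 0) else ?L $$ (i, j))"
  have Kc: "K \<in> carrier_mat n n" unfolding K_def by simp
  have Krow: "(K *\<^sub>v v) $ i = (if i \<in> D then v $ i else (?L *\<^sub>v v) $ i)"
    if v: "v \<in> carrier_vec n" and i: "i < n" for v i
  proof (cases "i \<in> D")
    case True
    have "(K *\<^sub>v v) $ i = (\<Sum>j\<in>{0..<n}. (if i = j then 1 else 0) * v $ j)"
      using True v i unfolding K_def by (auto simp: scalar_prod_def intro!: sum.cong)
    also have "\<dots> = (\<Sum>j\<in>{0..<n}. if i = j then v $ j else 0)" by (rule sum.cong) auto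
    also have "\<dots> = v $ i" using i by simp
    finally show ?thesis using True by simp
  next
    case False
    then show ?thesis using v i unfolding K_def laplacian_def
      by (auto simp: scalar_prod_def intro!: sum.cong)
  qed
  have Dn: "D \<subseteq> {..<n}" by (rule reps_sub[OF reps])
  have inj: "v = 0\<^sub>v n" if v: "v \<in> carrier_vec n" and Kv: "K *\<^sub>v v = 0\<^sub>v n" for v
  proof -
    have xD: "v $ e = 0" if e: "e \<in> D" for e
    proof -
      have en: "e < n" using e Dn by auto
      have "(K *\<^sub>v v) $ e = 0" using Kv en by simp
      then show ?thesis using Krow[OF v en] e by simp
    qed
    have hz: "hl n A (\<lambda>j. v $ j) i = 0" if i: "i < n" "i \<notin> D" for i
    proof -
      have "(K *\<^sub>v v) $ i = 0" using Kv i by simp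
      then show ?thesis using Krow[OF v i(1)] i lap_mult[OF A v i(1)] by simp
    qed
    show ?thesis
    proof (rule eq_vecI)
      fix i assume "i < dim_vec (0\<^sub>v n :: real vec)"
      then have i: "i < n" by simp
      show "v $ i = 0\<^sub>v n $ i"
        using uniq_zero[OF nn reps, of "\<lambda>j. v $ j"] xD hz i by simp
    qed (use v in simp)
  qed
  obtain B where Bc: "B \<in> carrier_mat n n" and KB: "K * B = 1\<^sub>m n"
    using inj_inverse[OF Kc] inj by blast
  define z where "z = B *\<^sub>v unit_vec n d"
  have zc: "z \<in> carrier_vec n" unfolding z_def using Bc by simp
  have Kz: "K *\<^sub>v z = unit_vec n d"
    unfolding z_def using Kc Bc KB
    by (metis assoc_mult_mat_vec one_mult_mat_vec unit_vec_carrier)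
  have dn: "d < n" using d Dn by auto
  have zD: "z $ i = (if i = d then 1 else 0)" if i: "i \<in> D" for i
  proof -
    have "i < n" using i Dn by auto
    then have "z $ i = unit_vec n d $ i" using Krow[OF zc, of i] Kz i by simp
    then show ?thesis using \<open>i < n\<close> by (simp add: unit_vec_def)
  qed
  have hN: "hl n A (\<lambda>j. z $ j) i = 0" if i: "i < n" "i \<notin> D" for i
  proof -
    have "i \<noteq> d" using i d by auto
    then have "(K *\<^sub>v z) $ i = 0" using Kz i by (simp add: unit_vec_def)
    then show ?thesis using Krow[OF zc i(1)] i lap_mult[OF A zc i(1)] by simp
  qed
  have Lz: "?L *\<^sub>v z = 0\<^sub>v n"
  proof (rule eq_vecI)
    fix i assume "i < dim_vec (0\<^sub>v n :: real vec)"
    then have i: "i < n" by simp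
    have "hl n A (\<lambda>j. z $ j) i = 0"
    proof (cases "i \<in> D")
      case True
      then show ?thesis using class_harm[OF nn reps True, of "\<lambda>j. z $ j"] hN by blast
    next
      case False then show ?thesis using hN i by blast
    qed
    then show "(?L *\<^sub>v z) $ i = 0\<^sub>v n $ i" using lap_mult[OF A zc i] i by simp
  qed (simp add: laplacian_def)
  show ?thesis using zc Lz zD by blast
qed


theorem proposition1:
  fixes n :: nat and A :: "real mat" and D :: "nat set"
  assumes "n > 0"
    and "A \<in> carrier_mat n n"
    and "\<And>i j. i < n \<Longrightarrow> j < n \<Longrightarrow> A $$ (i, j) \<ge> 0"
    and "final_class_representatives n A D"
  shows "invertible_mat ((U_mat n A D)\<^sup>T * U_mat n A D) \<and>
    (\<forall>M. M \<in> carrier_mat (dim_col (U_mat n A D)) (dim_col (U_mat n A D)) \<and>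
         M * ((U_mat n A D)\<^sup>T * U_mat n A D) = 1\<^sub>m (dim_col (U_mat n A D)) \<and>
         ((U_mat n A D)\<^sup>T * U_mat n A D) * M = 1\<^sub>m (dim_col (U_mat n A D)) \<longrightarrow>
       orth_proj_onto n (range_plus_ones n A) (U_mat n A D * M * (U_mat n A D)\<^sup>T))"
proof -
  note n = assms(1) and A = assms(2) and nn = assms(3) and reps = assms(4)
  define ks where "ks = sorted_list_of_set ({0..<n} - D)"
  define m where "m = length ks"
  define U where "U = U_mat n A D"
  define L where "L = laplacian n A"
  have Uc: "U \<in> carrier_mat n (Suc m)" unfolding U_def m_def ks_def by (rule U_carrier)
  have Lc: "L \<in> carrier_mat n n" unfolding L_def by (rule lap_carrier)
  have dimU: "dim_col U = Suc m" using Uc by simp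
  define G where "G = U\<^sup>T * U"
  have Gc: "G \<in> carrier_mat (Suc m) (Suc m)" unfolding G_def using Uc by simp
  have Ginj: "c = 0\<^sub>v (Suc m)" if c: "c \<in> carrier_vec (Suc m)" and Gz: "G *\<^sub>v c = 0\<^sub>v (Suc m)" for c
  proof -
    have Ucc: "U *\<^sub>v c \<in> carrier_vec n" using Uc c by simp
    have "G *\<^sub>v c = U\<^sup>T *\<^sub>v (U *\<^sub>v c)" unfolding G_def
      by (rule assoc_mult_mat_vec[OF _ Uc c]) (use Uc in simp)
    then have "U\<^sup>T *\<^sub>v (U *\<^sub>v c) = 0\<^sub>v (Suc m)" using Gz by simp
    moreover have "(U\<^sup>T *\<^sub>v (U *\<^sub>v c)) \<bullet> c = (U *\<^sub>v c) \<bullet> (U *\<^sub>v c)"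
      by (rule transpose_vec_mult_scalar[OF Uc c Ucc])
    ultimately have "(U *\<^sub>v c) \<bullet> (U *\<^sub>v c) = 0" using c by simp
    then have "U *\<^sub>v c = 0\<^sub>v n" by (rule self_prod_zero[OF Ucc])
    then show ?thesis using U_inj[OF A n nn reps] c unfolding U_def m_def ks_def by blast
  qed
  obtain B where Bc: "B \<in> carrier_mat (Suc m) (Suc m)" and BG: "B * G = 1\<^sub>m (Suc m)" and GB: "G * B = 1\<^sub>m (Suc m)"
    using inj_inverse[OF Gc] Ginj by blast
  have inv: "invertible_mat G"
    unfolding invertible_mat_def inverts_mat_def square_mat.simps using Gc Bc BG GB by auto
  have dist: "distinct ks" and setks: "set ks = {0..<n} - D" unfolding ks_def by auto
  have proj: "orth_proj_onto n (range_plus_ones n A) (U * M * U\<^sup>T)"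
    if Mc: "M \<in> carrier_mat (Suc m) (Suc m)" and MG: "M * G = 1\<^sub>m (Suc m)" and GM: "G * M = 1\<^sub>m (Suc m)" for M
    unfolding orth_proj_onto_def
  proof (intro conjI ballI)
    show "U * M * U\<^sup>T \<in> carrier_mat n n" using Uc Mc by simp
  next
    fix x :: "real vec" assume x: "x \<in> carrier_vec n"
    define y where "y = M *\<^sub>v (U\<^sup>T *\<^sub>v x)"
    have yc: "y \<in> carrier_vec (Suc m)" unfolding y_def using Mc Uc x by simp
    have Px: "(U * M * U\<^sup>T) *\<^sub>v x = U *\<^sub>v y"
    proof -
      have "(U * M * U\<^sup>T) *\<^sub>v x = (U * M) *\<^sub>v (U\<^sup>T *\<^sub>v x)"
        by (rule assoc_mult_mat_vec[of _ n "Suc m" _ n]) (use Uc Mc x in auto)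
      also have "\<dots> = U *\<^sub>v y" unfolding y_def
        by (rule assoc_mult_mat_vec[of _ n "Suc m" _ "Suc m"]) (use Uc Mc x in auto)
      finally show ?thesis .
    qed
    have yc': "y \<in> carrier_vec (Suc (length (sorted_list_of_set ({0..<n} - D))))"
      using yc unfolding m_def ks_def .
    show "(U * M * U\<^sup>T) *\<^sub>v x \<in> range_plus_ones n A"
    proof -
      let ?xv = "vec n (\<lambda>i. \<Sum>j<length (sorted_list_of_set ({0..<n} - D)). if sorted_list_of_set ({0..<n} - D) ! j = i then y $ Suc j else 0)"
      have "U *\<^sub>v y = laplacian n A *\<^sub>v ?xv + y $ 0 \<cdot>\<^sub>v ones_vec n"
        unfolding U_def by (rule U_mult[OF A yc'])
      moreover have "?xv \<in> carrier_vec n" by simp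
      ultimately show ?thesis unfolding Px range_plus_ones_def by blast
    qed
    define r where "r = x - U *\<^sub>v y"
    have rc: "r \<in> carrier_vec n" unfolding r_def using x Uc yc by simp
    have "U\<^sup>T *\<^sub>v (U *\<^sub>v y) = G *\<^sub>v y" unfolding G_def
      by (rule assoc_mult_mat_vec[symmetric, OF _ Uc yc]) (use Uc in simp)
    also have "\<dots> = (G * M) *\<^sub>v (U\<^sup>T *\<^sub>v x)" unfolding y_def
      by (rule assoc_mult_mat_vec[symmetric, OF Gc Mc]) (use Uc x in simp)
    also have "\<dots> = U\<^sup>T *\<^sub>v x" using GM Uc x by simp
    finally have UUy: "U\<^sup>T *\<^sub>v (U *\<^sub>v y) = U\<^sup>T *\<^sub>v x" .
    have UTr: "U\<^sup>T *\<^sub>v r = 0\<^sub>v (Suc m)"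
    proof -
      have "U\<^sup>T *\<^sub>v r = U\<^sup>T *\<^sub>v x - U\<^sup>T *\<^sub>v (U *\<^sub>v y)" unfolding r_def
        by (rule mult_minus_distrib_mat_vec[of _ "Suc m" n]) (use Uc x yc in auto)
      then show ?thesis using UUy Uc x by auto
    qed
    have colU: "(\<Sum>i<n. U $$ (i, c) * r $ i) = 0" if c: "c < Suc m" for c
    proof -
      have "(U\<^sup>T *\<^sub>v r) $ c = 0" using UTr c by simp
      then show ?thesis using c Uc rc by (simp add: scalar_prod_def lessThan_atLeast0 col_def)
    qed
    have sumr: "(\<Sum>i<n. r $ i) = 0"
      using colU[of 0] unfolding U_def U_mat_def Let_def by simp
    define t where "t = L\<^sup>T *\<^sub>v r"
    have tc: "t \<in> carrier_vec n" unfolding t_def using Lc rc by simp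
    have tk: "t $ k = (\<Sum>i<n. L $$ (i, k) * r $ i)" if k: "k < n" for k
      unfolding t_def using k Lc rc by (simp add: scalar_prod_def lessThan_atLeast0 col_def)
    have tN: "t $ k = 0" if k: "k < n" "k \<notin> D" for k
    proof -
      have "k \<in> set ks" using k setks by auto
      then obtain j where j: "j < m" "ks ! j = k" unfolding m_def by (metis in_set_conv_nth)
      have "(\<Sum>i<n. U $$ (i, Suc j) * r $ i) = 0" using colU[of "Suc j"] j by simp
      moreover have "U $$ (i, Suc j) = L $$ (i, k)" if "i < n" for i
        using that j unfolding U_def U_mat_def Let_def L_def ks_def[symmetric] m_def by simp
      ultimately show ?thesis using tk[OF k(1)] by simp
    qed
    have tD: "t $ d = 0" if d: "d \<in> D" for d
    proof -
      obtain z where zc: "z \<in> carrier_vec n" and Lz: "L *\<^sub>v z = 0\<^sub>v n"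
        and zD: "\<forall>i\<in>D. z $ i = (if i = d then 1 else 0)"
        using harm_ext[OF A nn reps d] unfolding L_def by blast
      have "t \<bullet> z = r \<bullet> (L *\<^sub>v z)" unfolding t_def by (rule transpose_vec_mult_scalar[OF Lc zc rc])
      also have "\<dots> = 0" using Lz rc by simp
      finally have tz0: "t \<bullet> z = 0" .
      have dn: "d < n" using d reps_sub[OF reps] by auto
      have "t \<bullet> z = (\<Sum>k\<in>{0..<n}. t $ k * z $ k)" using zc by (simp add: scalar_prod_def)
      also have "\<dots> = (\<Sum>k\<in>{0..<n}. if k = d then t $ d else 0)"
      proof (rule sum.cong)
        fix k assume "k \<in> {0..<n}"
        then show "t $ k * z $ k = (if k = d then t $ d else 0)"
          using tN zD zD[rule_format, OF d] by (cases "k \<in> D") auto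
      qed simp
      also have "\<dots> = t $ d" using dn by simp
      finally show ?thesis using tz0 by simp
    qed
    have t0: "t = 0\<^sub>v n"
      by (rule eq_vecI) (use tc tN tD in auto)
    fix w assume "w \<in> range_plus_ones n A"
    then obtain v c where v: "v \<in> carrier_vec n" and w: "w = L *\<^sub>v v + c \<cdot>\<^sub>v ones_vec n"
      unfolding range_plus_ones_def L_def by blast
    have "r \<bullet> (L *\<^sub>v v) = t \<bullet> v" unfolding t_def by (rule transpose_vec_mult_scalar[OF Lc v rc, symmetric])
    also have "\<dots> = 0" using t0 v by simp
    finally have e1: "r \<bullet> (L *\<^sub>v v) = 0" .
    have "r \<bullet> ones_vec n = (\<Sum>i<n. r $ i)" using rc
      by (simp add: scalar_prod_def ones_vec_def lessThan_atLeast0)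
    then have e2: "r \<bullet> ones_vec n = 0" using sumr by simp
    have "r \<bullet> w = r \<bullet> (L *\<^sub>v v) + r \<bullet> (c \<cdot>\<^sub>v ones_vec n)" unfolding w
      by (rule scalar_prod_add_distrib[OF rc]) (use Lc v ones_carrier in auto)
    also have "\<dots> = 0" using e1 e2 rc ones_carrier[of n] by simp
    finally show "(x - (U * M * U\<^sup>T) *\<^sub>v x) \<bullet> w = 0" unfolding Px r_def[symmetric] .
  qed
  show ?thesis
    using inv proj unfolding G_def[symmetric] U_def[symmetric] dimU by blast
qed

end
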